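(* Let $N\ge1$, let the parameter space $\Theta$ of the correlated Bernoulli random graph model be nondegenerate, let $g:\Theta\to\mathbb{R}$, and let $S:\mathcal{X}\to\mathbb{R}$ be an unbiased estimator of $g(\theta)$ (i.e. $\mathbb{E}_\theta(S)=g(\theta)$ for all $\theta\in\Theta$). Then a statistic $T:\mathcal{X}\to\mathbb{R}$ is an unbiased estimator of $g(\theta)$ if and only if $\overline{T}=\overline{S}$. In particular, $\overline{S}$ is an unbiased estimator of $g(\theta)$.
   Context: Correlated Bernoulli random graph model: fix a positive integer $N$ and let $\mathcal{R}=\{(p_1,\dots,p_N,\varrho_1,\dots,\varrho_N): p_i,\varrho_i\in[0,1]\}$. A parameter space is any subset $\Theta\subseteq\mathcal{R}$. For $\theta\in\Theta$, the random vectors $X,Y\in\{0,1\}^N$ are such that the pairs $(X_i,Y_i)$ are independent across $i$; $X_i,Y_i$ are each marginally Bernoulli$(p_i)$ with Pearson correlation $\varrho_i$ (so $\mathbb{P}(X_i=Y_i=1)=p_i^2+\varrho_ip_i(1-p_i)$, $\mathbb{P}(X_i=Y_i=0)=(1-p_i)^2+\varrho_ip_i(1-p_i)$, $\mathbb{P}(X_i=1,Y_i=0)=\mathbb{P}(X_i=0,Y_i=1)=(1-\varrho_i)p_i(1-p_i)$). Sample space $\mathcal{X}=\{(x,y):x,y\in\{0,1\}^N\}$. Let $\mathcal{R}^o=\{(p_1,\dots,p_N,0,\dots,0):p_i\in\mathbb{R}\}$; $\Theta$ is nondegenerate if $\Theta\cap\mathcal{R}^o$ has an interior point relative to $\mathcal{R}^o$.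 The disagreement vector $\mathcal{H}:\mathcal{X}\to\{0,\star,1\}^N$ has $i$th component $1$ if $x_i=y_i=1$, $0$ if $x_i=y_i=0$, $\star$ if $x_i\neq y_i$; for $h\in\{0,\star,1\}^N$ the disagreement class is $\mathcal{X}_h=\mathcal{H}^{-1}(h)$. For a statistic $S:\mathcal{X}\to\mathbb{R}$, its balanced variant $\overline{S}:\mathcal{X}\to\mathbb{R}$ is defined by $\overline{S}(x,y)=\frac{1}{|\mathcal{X}_h|}\sum_{(x',y')\in\mathcal{X}_h}S(x',y')$ where $h=\mathcal{H}(x,y)$. *)

theory Defs
  imports Complex_Main
begin

text \<open>Index set {1..N} is modelled by a finite type 'n (so N = CARD('n) \<ge> 1).
  A sample point is (x, y) with x, y :: 'n \<Rightarrow> bool (True = 1, False = 0).\<close>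

type_synonym 'n param = "('n \<Rightarrow> real) \<times> ('n \<Rightarrow> real)"
type_synonym 'n sample = "('n \<Rightarrow> bool) \<times> ('n \<Rightarrow> bool)"

definition param_space_R :: "'n param set" where
  "param_space_R = {(p, r). \<forall>i. 0 \<le> p i \<and> p i \<le> 1 \<and> 0 \<le> r i \<and> r i \<le> 1}"

text \<open>Nondegenerate: Theta intersected with R^o = {(p,0) : p \<in> R^N} has a relative interior point.\<close>
definition nondegenerate :: "'n param set \<Rightarrow> bool" where
  "nondegenerate \<Theta> \<longleftrightarrow>
     (\<exists>p0 (e::real). e > 0 \<and>
        (\<forall>p. (\<forall>i. \<bar>p i - p0 i\<bar> < e) \<longrightarrow> (p, (\<lambda>_. 0)) \<in> \<Theta>))"

definition cell_prob :: "real \<Rightarrow> real \<Rightarrow> bool \<Rightarrow> bool \<Rightarrow> real" where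
  "cell_prob p r a b =
     (if a \<and> b then p\<^sup>2 + r * p * (1 - p)
      else if \<not> a \<and> \<not> b then (1 - p)\<^sup>2 + r * p * (1 - p)
      else (1 - r) * p * (1 - p))"

definition prob_pt :: "'n::finite param \<Rightarrow> 'n sample \<Rightarrow> real" where
  "prob_pt \<theta> z = (\<Prod>i\<in>UNIV. cell_prob (fst \<theta> i) (snd \<theta> i) (fst z i) (snd z i))"

definition expect :: "'n::finite param \<Rightarrow> ('n sample \<Rightarrow> real) \<Rightarrow> real" where
  "expect \<theta> S = (\<Sum>z\<in>UNIV. prob_pt \<theta> z * S z)"

definition unbiased :: "'n::finite param set \<Rightarrow> ('n param \<Rightarrow> real) \<Rightarrow> ('n sample \<Rightarrow> real) \<Rightarrow> bool" where
  "unbiased \<Theta> g S \<longleftrightarrow> (\<forall>\<theta>\<in>\<Theta>. expect \<theta> S = g \<theta>)"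

datatype dis = D0 | DStar | D1

definition disagreement :: "'n sample \<Rightarrow> ('n \<Rightarrow> dis)" where
  "disagreement z = (\<lambda>i. if fst z i \<and> snd z i then D1
                         else if \<not> fst z i \<and> \<not> snd z i then D0 else DStar)"

definition dis_class :: "('n \<Rightarrow> dis) \<Rightarrow> 'n sample set" where
  "dis_class h = {z. disagreement z = h}"

definition balanced :: "('n::finite sample \<Rightarrow> real) \<Rightarrow> 'n sample \<Rightarrow> real" where
  "balanced S z = (\<Sum>z'\<in>dis_class (disagreement z). S z') / real (card (dis_class (disagreement z)))"

end

theory Submission
  imports Defs "HOL-Computational_Algebra.Polynomial"
begin

lemma quad_zero:
  fixes a b d x0 e :: real
  assumes "e > 0" and H: "\<And>x. \<bar>x - x0\<bar> < e \<Longrightarrow> a*(1-x)^2 + b*(x*(1-x)) + d*x^2 = 0"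
  shows "a = 0 \<and> b = 0 \<and> d = 0"
proof -
  let ?P = "[:a, b - 2*a, a - b + d:]"
  have r: "poly ?P x = 0" if "x \<in> {x0-e<..<x0+e}" for x
  proof -
    have "\<bar>x - x0\<bar> < e" using that by auto
    from H[OF this] show ?thesis by (simp add: algebra_simps power2_eq_square)
  qed
  have "?P = 0"
  proof (rule ccontr)
    assume "?P \<noteq> 0"
    hence "finite {x. poly ?P x = 0}" by (rule poly_roots_finite)
    moreover have "{x0-e<..<x0+e} \<subseteq> {x. poly ?P x = 0}" using r by blast
    ultimately have "finite {x0-e<..<x0+e}" by (rule finite_subset[rotated])
    thus False using \<open>e>0\<close> infinite_Ioo[of "x0-e" "x0+e"] by simp
  qed
  thus ?thesis by auto
qed

definition cw :: "real \<Rightarrow> real \<Rightarrow> dis \<Rightarrow> real" where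
  "cw p r v = (case v of D1 \<Rightarrow> p\<^sup>2 + r * p * (1 - p)
       | D0 \<Rightarrow> (1 - p)\<^sup>2 + r * p * (1 - p) | DStar \<Rightarrow> (1 - r) * p * (1 - p))"

definition HI :: "'n set \<Rightarrow> ('n \<Rightarrow> dis) set" where
  "HI I = {h. \<forall>i. i \<notin> I \<longrightarrow> h i = D0}"

lemma disagreement_surj: "range (disagreement :: 'n sample \<Rightarrow> _) = UNIV"
proof -
  have "h = disagreement ((\<lambda>i. h i \<noteq> D0), (\<lambda>i. h i = D1))" for h :: "'n \<Rightarrow> dis"
    by (rule ext, rename_tac i, case_tac "h i"; simp add: disagreement_def)
  thus ?thesis by blast
qed

lemma finite_H: "finite (UNIV :: (('n::finite) \<Rightarrow> dis) set)"
  by (metis disagreement_surj finite finite_imageI)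

lemma HI_split:
  assumes "j \<notin> I"
  shows "{h \<in> HI (insert j I). h j = v} = (\<lambda>h. h(j:=v)) ` HI I"
  using assms unfolding HI_def
  apply (auto simp: image_iff)
  subgoal for h by (rule exI[of _ "h(j:=D0)"]) auto
  done

lemma indep:
  fixes c :: "(('n::finite) \<Rightarrow> dis) \<Rightarrow> real" and p0 :: "'n \<Rightarrow> real"
  assumes "finite I" and "e > 0"
  shows "(\<forall>p. (\<forall>i\<in>I. \<bar>p i - p0 i\<bar> < e) \<longrightarrow> (\<Sum>h\<in>HI I. c h * (\<Prod>i\<in>I. cw (p i) 0 (h i))) = 0)
         \<Longrightarrow> \<forall>h\<in>HI I. c h = 0"
  using assms(1)
proof (induction I arbitrary: c rule: finite_induct)
  case empty
  have H0: "HI {} = {\<lambda>_. D0}" unfolding HI_def by auto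
  have "sum c (HI {}) = 0" using empty by simp
  thus ?case unfolding H0 by simp
next
  case (insert j I)
  let ?V = "{D0, DStar, D1}"
  have finHI: "finite (HI K)" for K :: "'n set" using finite_H by (rule finite_subset[rotated]) simp
  have inj: "inj_on (\<lambda>h. h(j:=v)) (HI I)" for v
    unfolding inj_on_def
  proof (intro ballI impI)
    fix h1 h2 assume a: "h1 \<in> HI I" "h2 \<in> HI I" "h1(j:=v) = h2(j:=v)"
    show "h1 = h2"
    proof
      fix i show "h1 i = h2 i"
        using a insert(2) unfolding HI_def by (cases "i = j") (auto dest: fun_cong[of _ _ i])
    qed
  qed
  define A where "A v p = (\<Sum>h\<in>HI I. c (h(j:=v)) * (\<Prod>i\<in>I. cw (p i) 0 (h i)))" for v p
  have decomp: "(\<Sum>h\<in>HI (insert j I). c h * (\<Prod>i\<in>insert j I. cw (p i) 0 (h i)))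
     = (\<Sum>v\<in>?V. cw (p j) 0 v * A v p)" for p
  proof -
    have img: "(\<lambda>h. h j) ` HI (insert j I) \<subseteq> ?V" by (auto intro: dis.exhaust)
    have "(\<Sum>h\<in>HI (insert j I). c h * (\<Prod>i\<in>insert j I. cw (p i) 0 (h i)))
      = (\<Sum>v\<in>?V. \<Sum>h\<in>{h \<in> HI (insert j I). h j = v}. c h * (\<Prod>i\<in>insert j I. cw (p i) 0 (h i)))"
      by (rule sum.group[OF finHI _ img, symmetric]) simp
    also have "\<dots> = (\<Sum>v\<in>?V. cw (p j) 0 v * A v p)"
    proof (rule sum.cong[OF refl])
      fix v
      have "(\<Sum>h\<in>{h \<in> HI (insert j I). h j = v}. c h * (\<Prod>i\<in>insert j I. cw (p i) 0 (h i)))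
        = (\<Sum>h\<in>HI I. c (h(j:=v)) * (\<Prod>i\<in>insert j I. cw (p i) 0 ((h(j:=v)) i)))"
        unfolding HI_split[OF insert(2)] by (subst sum.reindex[OF inj]) simp
      also have "\<dots> = (\<Sum>h\<in>HI I. cw (p j) 0 v * (c (h(j:=v)) * (\<Prod>i\<in>I. cw (p i) 0 (h i))))"
      proof (rule sum.cong[OF refl])
        fix h
        have "(\<Prod>i\<in>insert j I. cw (p i) 0 ((h(j:=v)) i)) = cw (p j) 0 v * (\<Prod>i\<in>I. cw (p i) 0 ((h(j:=v)) i))"
          using insert(1,2) by simp
        also have "(\<Prod>i\<in>I. cw (p i) 0 ((h(j:=v)) i)) = (\<Prod>i\<in>I. cw (p i) 0 (h i))"
          using insert(2) by (intro prod.cong) auto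
        finally show "c (h(j:=v)) * (\<Prod>i\<in>insert j I. cw (p i) 0 ((h(j:=v)) i)) = cw (p j) 0 v * (c (h(j:=v)) * (\<Prod>i\<in>I. cw (p i) 0 (h i)))"
          by simp
      qed
      also have "\<dots> = cw (p j) 0 v * A v p" unfolding A_def by (simp add: sum_distrib_left)
      finally show "(\<Sum>h\<in>{h \<in> HI (insert j I). h j = v}. c h * (\<Prod>i\<in>insert j I. cw (p i) 0 (h i))) = cw (p j) 0 v * A v p" .
    qed
    finally show ?thesis .
  qed
  have Azero: "A v p = 0" if pI: "\<forall>i\<in>I. \<bar>p i - p0 i\<bar> < e" and vV: "v \<in> ?V" for p v
  proof -
    have "A D0 p * (1-x)^2 + A DStar p * (x*(1-x)) + A D1 p * x^2 = 0" if "\<bar>x - p0 j\<bar> < e" for x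
    proof -
      let ?q = "p(j:=x)"
      have "\<forall>i\<in>insert j I. \<bar>?q i - p0 i\<bar> < e" using pI that by auto
      hence "(\<Sum>v\<in>?V. cw (?q j) 0 v * A v ?q) = 0" using insert.prems decomp[of ?q] by simp
      moreover have "A v ?q = A v p" for v unfolding A_def using insert(2)
        by (intro sum.cong refl arg_cong2[where f="(*)"] prod.cong) auto
      ultimately have "(\<Sum>v\<in>?V. cw x 0 v * A v p) = 0" by simp
      thus ?thesis by (simp add: cw_def algebra_simps)
    qed
    from quad_zero[OF \<open>e>0\<close> this] vV show ?thesis by auto
  qed
  show ?case
  proof
    fix h assume h: "h \<in> HI (insert j I)"
    have "h j \<in> ?V" by (cases "h j") auto
    have "\<forall>h'\<in>HI I. c (h'(j := h j)) = 0"
      using Azero[OF _ \<open>h j \<in> ?V\<close>, unfolded A_def] by (intro insert.IH allI impI) blast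
    moreover have "h(j:=D0) \<in> HI I" using h unfolding HI_def by auto
    ultimately show "c h = 0" by force
  qed
qed


definition Wg :: "('n::finite) param \<Rightarrow> ('n \<Rightarrow> dis) \<Rightarrow> real" where
  "Wg \<theta> h = (\<Prod>i\<in>UNIV. cw (fst \<theta> i) (snd \<theta> i) (h i))"

definition CS :: "(('n::finite) sample \<Rightarrow> real) \<Rightarrow> ('n \<Rightarrow> dis) \<Rightarrow> real" where
  "CS T h = sum T (dis_class h)"

lemma cell_cw: "cell_prob p r a b = cw p r (if a \<and> b then D1 else if \<not> a \<and> \<not> b then D0 else DStar)"
  by (cases a; cases b) (simp_all add: cell_prob_def cw_def)

lemma prob_Wg: "prob_pt \<theta> z = Wg \<theta> (disagreement z)"
  unfolding prob_pt_def Wg_def disagreement_def by (simp add: cell_cw)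

lemma expect_CS: "expect \<theta> T = (\<Sum>h\<in>UNIV. Wg \<theta> h * CS T h)"
proof -
  have "expect \<theta> T = (\<Sum>z\<in>UNIV. Wg \<theta> (disagreement z) * T z)"
    unfolding expect_def prob_Wg ..
  also have "\<dots> = (\<Sum>h\<in>UNIV. \<Sum>z\<in>{z\<in>UNIV. disagreement z = h}. Wg \<theta> (disagreement z) * T z)"
    by (rule sum.group[symmetric]) (auto simp: finite_H)
  also have "\<dots> = (\<Sum>h\<in>UNIV. Wg \<theta> h * CS T h)"
    unfolding CS_def dis_class_def by (intro sum.cong refl) (simp add: sum_distrib_left)
  finally show ?thesis .
qed

lemma class_fin_ne: "finite (dis_class (h :: ('n::finite) \<Rightarrow> dis))" "card (dis_class h) > 0"
proof -
  show f: "finite (dis_class h)" by simp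
  obtain z where "disagreement z = h" using disagreement_surj by (metis UNIV_I imageE)
  hence "z \<in> dis_class h" unfolding dis_class_def by simp
  with f show "card (dis_class h) > 0" using card_gt_0_iff by blast
qed

lemma balanced_CS: "balanced T z = CS T (disagreement z) / real (card (dis_class (disagreement z)))"
  unfolding balanced_def CS_def ..

lemma bal_iff: fixes T S :: "('n::finite) sample \<Rightarrow> real" shows "balanced T = balanced S \<longleftrightarrow> (\<forall>h. CS T h = CS S h)"
proof
  assume a: "balanced T = balanced S"
  show "\<forall>h. CS T h = CS S h"
  proof
    fix h
    obtain z :: "'n sample" where z: "disagreement z = h" using disagreement_surj by (metis UNIV_I imageE)
    have "balanced T z = balanced S z" using a by simp
    thus "CS T h = CS S h" unfolding balanced_CS z using class_fin_ne(2)[of h] by (auto simp: card_gt_0_iff)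
  qed
next
  assume "\<forall>h. CS T h = CS S h"
  thus "balanced T = balanced S" unfolding balanced_CS by (intro ext) simp
qed

lemma CS_bal: "CS (balanced S) h = CS S h"
proof -
  have "CS (balanced S) h = (\<Sum>z\<in>dis_class h. CS S h / real (card (dis_class h)))"
    unfolding CS_def[of "balanced S"]
  proof (intro sum.cong refl)
    fix z assume "z \<in> dis_class h"
    hence "disagreement z = h" by (simp add: dis_class_def)
    thus "balanced S z = CS S h / real (card (dis_class h))" by (simp add: balanced_CS)
  qed
  also have "\<dots> = CS S h" using class_fin_ne(2)[of h] by (auto simp: card_gt_0_iff)
  finally show ?thesis .
qed

theorem theorem2:
  fixes \<Theta> :: "('n::finite) param set"
    and g :: "'n param \<Rightarrow> real"
    and S :: "'n sample \<Rightarrow> real"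
  assumes "\<Theta> \<subseteq> param_space_R"
    and "nondegenerate \<Theta>"
    and "unbiased \<Theta> g S"
  shows "(\<forall>T :: 'n sample \<Rightarrow> real. unbiased \<Theta> g T \<longleftrightarrow> balanced T = balanced S)
         \<and> unbiased \<Theta> g (balanced S)"
proof -
  obtain p0 and e :: real where e: "e > 0"
    and ball: "\<And>p. (\<forall>i. \<bar>p i - p0 i\<bar> < e) \<Longrightarrow> (p, (\<lambda>_. 0)) \<in> \<Theta>"
    using assms(2) unfolding nondegenerate_def by blast
  have HU: "HI UNIV = UNIV" unfolding HI_def by simp
  have conv: "unbiased \<Theta> g T" if "\<forall>h. CS T h = CS S h" for T
    using assms(3) that unfolding unbiased_def expect_CS by simp
  have fwd: "\<forall>h. CS T h = CS S h" if u: "unbiased \<Theta> g T" for T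
  proof -
    let ?c = "\<lambda>h. CS T h - CS S h"
    have "\<forall>p. (\<forall>i\<in>UNIV. \<bar>p i - p0 i\<bar> < e) \<longrightarrow>
           (\<Sum>h\<in>HI UNIV. ?c h * (\<Prod>i\<in>UNIV. cw (p i) 0 (h i))) = 0"
    proof (intro allI impI)
      fix p :: "'n \<Rightarrow> real" assume "\<forall>i\<in>UNIV. \<bar>p i - p0 i\<bar> < e"
      hence th: "(p, (\<lambda>_. 0)) \<in> \<Theta>" using ball by simp
      have "expect (p, (\<lambda>_. 0)) T = expect (p, (\<lambda>_. 0)) S"
        using u assms(3) th unfolding unbiased_def by simp
      hence "(\<Sum>h\<in>UNIV. Wg (p, (\<lambda>_. 0)) h * CS T h) - (\<Sum>h\<in>UNIV. Wg (p, (\<lambda>_. 0)) h * CS S h) = 0"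
        unfolding expect_CS by simp
      hence "(\<Sum>h\<in>UNIV. Wg (p, (\<lambda>_. 0)) h * ?c h) = 0"
        by (simp add: sum_subtractf[symmetric] algebra_simps)
      thus "(\<Sum>h\<in>HI UNIV. ?c h * (\<Prod>i\<in>UNIV. cw (p i) 0 (h i))) = 0"
        unfolding HU Wg_def by (simp add: mult.commute)
    qed
    from indep[OF finite e this] show ?thesis unfolding HU by simp
  qed
  show ?thesis
    using conv fwd bal_iff CS_bal by metis
qed

end
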